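(* Let $f$ be a function of unitation on $\{0,1\}^n$, and let $\sigma=1$, $\kappa\in\mathbb{N}$ and $\mu\geq (n+1)\cdot\kappa$. Then the expected time (number of generations) for the $(\mu+1)$ EA with phenotypic clearing with clearing radius $\sigma$, niche capacity $\kappa$ and population size $\mu$ on $f$ to find the search points $0^n$ and $1^n$ is $O(\mu n\log n)$.
   Context: A function of unitation is $f:\{0,1\}^n\to\mathbb{R}$ with $f(x)=u(|x|_1)$ for some $u:\{0,\dots,n\}\to\mathbb{R}^+$, where $|x|_1$ is the number of 1-bits of $x$; fitness values are assumed positive. The $(\mu+1)$ EA with clearing (population size $\mu$, clearing radius $\sigma$, niche capacity $\kappa$, distance function $\mathrm{d}$): $P_0$ consists of $\mu$ bit strings chosen independently and uniformly at random. In generation $t$: choose a parent $x\in P_t$ uniformly at random; create $y$ by flipping each bit of $x$ independently with probability $1/n$; let $P_t^*=P_t\cup\{y\}$; update the fitness values of $P_t^*$ by the clearing procedure: sort $P_t^*$ by decreasing fitness; for $i=1,\dots,|P_t^*|$, if the current fitness of $P[i]$ is positive, set $w:=1$ and for $j=i+1,\dots,|P_t^*|$: if the current fitness of $P[j]$ is positive and $\mathrm{d}(P[i],P[j])<\sigma$ then, if $w<\kappa$ set $w:=w+1$, else set the fitness of $P[j]$ to $0$. Individuals whose fitness is not reset are winners, the others are cleared. Then choose $z\in P_t$ with worst (cleared) fitness uniformly at random; if the (cleared) fitness of $y$ is at least that of $z$, set $P_{t+1}=P_t^*\setminus\{z\}$, otherwise $P_{t+1}=P_t^*\setminus\{y\}$.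 Phenotypic clearing uses $\mathrm{d}(x,y)=\big||x|_1-|y|_1\big|$. *)

theory Defs
  imports "HOL-Probability.Probability"
begin

type_synonym bitstring = "bool list"
type_synonym population = "bitstring list"

definition ones :: "bitstring \<Rightarrow> nat" where
  "ones x = length (filter id x)"

definition pheno_dist :: "bitstring \<Rightarrow> bitstring \<Rightarrow> real" where
  "pheno_dist x y = \<bar>real (ones x) - real (ones y)\<bar>"

definition uniform_string :: "nat \<Rightarrow> bitstring pmf" where
  "uniform_string n = pmf_of_set {xs. length xs = n}"

fun init_pop :: "nat \<Rightarrow> nat \<Rightarrow> population pmf" where
  "init_pop n 0 = return_pmf []"
| "init_pop n (Suc m) = do { x \<leftarrow> uniform_string n; xs \<leftarrow> init_pop n m; return_pmf (x # xs) }"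

fun mutate :: "real \<Rightarrow> bitstring \<Rightarrow> bitstring pmf" where
  "mutate p [] = return_pmf []"
| "mutate p (b # bs) = do { c \<leftarrow> bernoulli_pmf p; r \<leftarrow> mutate p bs; return_pmf ((b \<noteq> c) # r) }"

text \<open>Inner loop of the clearing procedure for winner index i (index into Q), going over the
  indices js (in sorted order) that come after i. State: current fitness values and counter w.\<close>
definition clear_inner ::
  "(bitstring \<Rightarrow> bitstring \<Rightarrow> real) \<Rightarrow> real \<Rightarrow> nat \<Rightarrow> bitstring list \<Rightarrow> nat \<Rightarrow> nat list
     \<Rightarrow> (nat \<Rightarrow> real) \<Rightarrow> (nat \<Rightarrow> real)" where
  "clear_inner d \<sigma> \<kappa> Q i js fit =
     fst (foldl (\<lambda>(g, w) j. if 0 < g j \<and> d (Q ! i) (Q ! j) < \<sigma>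
                            then (if w < \<kappa> then (g, w + 1) else (g(j := 0), w))
                            else (g, w)) (fit, 1::nat) js)"

fun clear_outer ::
  "(bitstring \<Rightarrow> bitstring \<Rightarrow> real) \<Rightarrow> real \<Rightarrow> nat \<Rightarrow> bitstring list \<Rightarrow> nat list
     \<Rightarrow> (nat \<Rightarrow> real) \<Rightarrow> (nat \<Rightarrow> real)" where
  "clear_outer d \<sigma> \<kappa> Q [] fit = fit"
| "clear_outer d \<sigma> \<kappa> Q (i # is) fit =
     clear_outer d \<sigma> \<kappa> Q is (if 0 < fit i then clear_inner d \<sigma> \<kappa> Q i is fit else fit)"

text \<open>Cleared fitness of the members of Q (indexed by position in Q). Q is sorted by
  decreasing fitness with a stable sort (ties keep their order in Q).\<close>
definition cleared_fitness ::
  "(bitstring \<Rightarrow> real) \<Rightarrow> (bitstring \<Rightarrow> bitstring \<Rightarrow> real) \<Rightarrow> real \<Rightarrow> nat \<Rightarrow> bitstring list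
     \<Rightarrow> nat \<Rightarrow> real" where
  "cleared_fitness f d \<sigma> \<kappa> Q =
     clear_outer d \<sigma> \<kappa> Q (sort_key (\<lambda>i. - f (Q ! i)) [0..<length Q]) (\<lambda>i. f (Q ! i))"

definition remove_at :: "nat \<Rightarrow> 'a list \<Rightarrow> 'a list" where
  "remove_at k xs = take k xs @ drop (Suc k) xs"

definition ea_step ::
  "nat \<Rightarrow> (bitstring \<Rightarrow> real) \<Rightarrow> (bitstring \<Rightarrow> bitstring \<Rightarrow> real) \<Rightarrow> real \<Rightarrow> nat
     \<Rightarrow> population \<Rightarrow> population pmf" where
  "ea_step n f d \<sigma> \<kappa> P = do {
     i \<leftarrow> pmf_of_set {..<length P};
     y \<leftarrow> mutate (1 / real n) (P ! i);
     let Q = P @ [y];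
     let cf = cleared_fitness f d \<sigma> \<kappa> Q;
     let worst = Min (cf ` {..<length P});
     z \<leftarrow> pmf_of_set {k. k < length P \<and> cf k = worst};
     return_pmf (if cf z \<le> cf (length P) then remove_at z Q else P)
   }"

text \<open>Distribution of the state at generation t: the population P_t together with flags
  recording whether 0^n resp. 1^n has been contained in some population P_s, s \<le> t.\<close>
fun ea_state ::
  "nat \<Rightarrow> nat \<Rightarrow> (bitstring \<Rightarrow> real) \<Rightarrow> (bitstring \<Rightarrow> bitstring \<Rightarrow> real) \<Rightarrow> real \<Rightarrow> nat
     \<Rightarrow> nat \<Rightarrow> (population \<times> bool \<times> bool) pmf" where
  "ea_state n \<mu> f d \<sigma> \<kappa> 0 =
     map_pmf (\<lambda>P. (P, replicate n False \<in> set P, replicate n True \<in> set P)) (init_pop n \<mu>)"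
| "ea_state n \<mu> f d \<sigma> \<kappa> (Suc t) =
     ea_state n \<mu> f d \<sigma> \<kappa> t \<bind> (\<lambda>(P, a, b).
       map_pmf (\<lambda>P'. (P', a \<or> replicate n False \<in> set P', b \<or> replicate n True \<in> set P'))
               (ea_step n f d \<sigma> \<kappa> P))"

text \<open>Expected number of generations T until both 0^n and 1^n have been found,
  E[T] = sum_{t \<ge> 0} Pr[T > t] (as an extended non-negative real, possibly infinite).\<close>
definition expected_time ::
  "nat \<Rightarrow> nat \<Rightarrow> (bitstring \<Rightarrow> real) \<Rightarrow> (bitstring \<Rightarrow> bitstring \<Rightarrow> real) \<Rightarrow> real \<Rightarrow> nat \<Rightarrow> ennreal" where
  "expected_time n \<mu> f d \<sigma> \<kappa> =
     (\<Sum>t. ennreal (measure_pmf.prob (ea_state n \<mu> f d \<sigma> \<kappa> t) {s. \<not> (fst (snd s) \<and> snd (snd s))}))"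

end

theory Submission
  imports Defs
begin

definition cstep :: "(bitstring \<Rightarrow> bitstring \<Rightarrow> real) \<Rightarrow> real \<Rightarrow> nat \<Rightarrow> bitstring list \<Rightarrow> nat
   \<Rightarrow> (nat \<Rightarrow> real) \<times> nat \<Rightarrow> nat \<Rightarrow> (nat \<Rightarrow> real) \<times> nat" where
  "cstep d \<sigma> \<kappa> Q i = (\<lambda>(g, w) j. if 0 < g j \<and> d (Q ! i) (Q ! j) < \<sigma>
                            then (if w < \<kappa> then (g, w + 1) else (g(j := 0), w))
                            else (g, w))"

lemma clear_inner_cstep:
  "clear_inner d \<sigma> \<kappa> Q i js fit = fst (foldl (cstep d \<sigma> \<kappa> Q i) (fit, 1) js)"
  by (simp add: clear_inner_def cstep_def)

lemma inner_other:
  "k \<notin> set js \<Longrightarrow> fst (foldl (cstep d \<sigma> \<kappa> Q i) s js) k = fst s k"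
proof (induction js arbitrary: s)
  case Nil then show ?case by simp
next
  case (Cons j js)
  then show ?case by (cases s) (auto simp: cstep_def)
qed

lemma inner_zero:
  "fst (foldl (cstep d \<sigma> \<kappa> Q i) s js) k = fst s k \<or>
   (fst (foldl (cstep d \<sigma> \<kappa> Q i) s js) k = 0 \<and> k \<in> set js \<and> d (Q ! i) (Q ! k) < \<sigma>)"
proof (induction js arbitrary: s)
  case Nil then show ?case by simp
next
  case (Cons j js)
  obtain g w where s: "s = (g, w)" by (cases s)
  let ?s1 = "cstep d \<sigma> \<kappa> Q i s j"
  have step: "fst ?s1 k = g k \<or> (fst ?s1 k = 0 \<and> k = j \<and> d (Q ! i) (Q ! k) < \<sigma>)"
    by (auto simp: cstep_def s)
  have "foldl (cstep d \<sigma> \<kappa> Q i) s (j # js) = foldl (cstep d \<sigma> \<kappa> Q i) ?s1 js" by simp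
  then show ?case using Cons.IH[of ?s1] step s by auto
qed

lemma outer_other:
  "k \<notin> set xs \<Longrightarrow> clear_outer d \<sigma> \<kappa> Q xs g k = g k"
proof (induction xs arbitrary: g)
  case Nil then show ?case by simp
next
  case (Cons i xs)
  then show ?case by (auto simp: clear_inner_cstep inner_other)
qed

lemma outer_zero:
  "distinct xs \<Longrightarrow> clear_outer d \<sigma> \<kappa> Q xs g k = g k \<or>
   (clear_outer d \<sigma> \<kappa> Q xs g k = 0 \<and> (\<exists>i\<in>set xs. i \<noteq> k \<and> d (Q ! i) (Q ! k) < \<sigma>))"
proof (induction xs arbitrary: g)
  case Nil then show ?case by simp
next
  case (Cons i xs)
  define g' where "g' = (if 0 < g i then clear_inner d \<sigma> \<kappa> Q i xs g else g)"
  have r: "clear_outer d \<sigma> \<kappa> Q (i # xs) g = clear_outer d \<sigma> \<kappa> Q xs g'" by (simp add: g'_def)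
  have g': "g' k = g k \<or> (g' k = 0 \<and> k \<in> set xs \<and> d (Q ! i) (Q ! k) < \<sigma>)"
    unfolding g'_def clear_inner_cstep using inner_zero[of d \<sigma> \<kappa> Q i "(g,1)" xs k] by auto
  have "i \<notin> set xs" using Cons.prems by simp
  then show ?case using Cons.IH[of g'] Cons.prems g' r by auto
qed

lemma inner_count:
  "distinct js \<Longrightarrow> finite D \<Longrightarrow> D \<inter> set js = {} \<Longrightarrow>
   card {j\<in>D. d (Q!i) (Q!j) < \<sigma> \<and> 0 < g j} + 1 \<le> w \<Longrightarrow> w \<le> \<kappa> \<Longrightarrow>
   foldl (cstep d \<sigma> \<kappa> Q i) (g,w) js = (g',w') \<Longrightarrow>
   card {j \<in> D \<union> set js. d (Q!i) (Q!j) < \<sigma> \<and> 0 < g' j} + 1 \<le> w' \<and> w' \<le> \<kappa>"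
proof (induction js arbitrary: D g w)
  case Nil then show ?case by simp
next
  case (Cons j js)
  obtain g1 w1 where s1: "cstep d \<sigma> \<kappa> Q i (g, w) j = (g1, w1)" by (cases "cstep d \<sigma> \<kappa> Q i (g, w) j")
  have jD: "j \<notin> D" using Cons.prems by auto
  have inv: "card {j'\<in>insert j D. d (Q!i) (Q!j') < \<sigma> \<and> 0 < g1 j'} + 1 \<le> w1 \<and> w1 \<le> \<kappa>"
  proof (cases "0 < g j \<and> d (Q ! i) (Q ! j) < \<sigma>")
    case True
    show ?thesis
    proof (cases "w < \<kappa>")
      case True2: True
      then have e: "g1 = g" "w1 = w + 1" using s1 True by (auto simp: cstep_def)
      have "{j'\<in>insert j D. d (Q!i) (Q!j') < \<sigma> \<and> 0 < g1 j'} = insert j {j'\<in>D. d (Q!i) (Q!j') < \<sigma> \<and> 0 < g j'}"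
        using True e by auto
      then show ?thesis using Cons.prems jD True2 e by (simp add: card_insert_if)
    next
      case False
      then have e: "g1 = g(j := 0)" "w1 = w" using s1 True by (auto simp: cstep_def)
      have "{j'\<in>insert j D. d (Q!i) (Q!j') < \<sigma> \<and> 0 < g1 j'} = {j'\<in>D. d (Q!i) (Q!j') < \<sigma> \<and> 0 < g j'}"
        using e jD by auto
      then show ?thesis using Cons.prems e by simp
    qed
  next
    case False
    then have e: "g1 = g" "w1 = w" using s1 by (auto simp: cstep_def)
    have "{j'\<in>insert j D. d (Q!i) (Q!j') < \<sigma> \<and> 0 < g1 j'} = {j'\<in>D. d (Q!i) (Q!j') < \<sigma> \<and> 0 < g j'}"
      using e False by auto
    then show ?thesis using Cons.prems e by simp
  qed
  have "foldl (cstep d \<sigma> \<kappa> Q i) (g1, w1) js = (g', w')" using Cons.prems(6) s1 by simp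
  then have "card {j' \<in> insert j D \<union> set js. d (Q!i) (Q!j') < \<sigma> \<and> 0 < g' j'} + 1 \<le> w' \<and> w' \<le> \<kappa>"
    using Cons.IH[of "insert j D" g1 w1] Cons.prems inv by auto
  then show ?case by simp
qed

lemma outer_count:
  assumes "distinct xs" "1 \<le> \<kappa>" "\<And>a b. d (Q!a) (Q!b) < \<sigma> \<longleftrightarrow> lvl a = lvl b"
  shows "card {k \<in> set xs. lvl k = l \<and> 0 < clear_outer d \<sigma> \<kappa> Q xs g k} \<le> \<kappa>"
  using assms(1)
proof (induction xs arbitrary: g)
  case Nil then show ?case using assms by simp
next
  case (Cons i xs)
  define g' where "g' = (if 0 < g i then clear_inner d \<sigma> \<kappa> Q i xs g else g)"
  define r where "r = clear_outer d \<sigma> \<kappa> Q xs g'"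
  have r: "clear_outer d \<sigma> \<kappa> Q (i # xs) g = r" by (simp add: g'_def r_def)
  have ixs: "i \<notin> set xs" "distinct xs" using Cons.prems by auto
  have ri: "r i = g i" unfolding r_def using ixs
    by (simp add: outer_other g'_def clear_inner_cstep inner_other)
  have IH: "card {k \<in> set xs. lvl k = l \<and> 0 < r k} \<le> \<kappa>" using Cons.IH[OF ixs(2)] r_def by simp
  show ?case
  proof (cases "0 < g i \<and> l = lvl i")
    case False
    then have "{k \<in> set (i#xs). lvl k = l \<and> 0 < r k} = {k \<in> set xs. lvl k = l \<and> 0 < r k}"
      using ri by auto
    then show ?thesis using IH r by simp
  next
    case True
    obtain g1 w1 where f: "foldl (cstep d \<sigma> \<kappa> Q i) (g, 1) xs = (g1, w1)"
      by (cases "foldl (cstep d \<sigma> \<kappa> Q i) (g, 1) xs")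
    have gg: "g' = g1" using True f by (simp add: g'_def clear_inner_cstep)
    have c1: "card {j \<in> {} \<union> set xs. d (Q!i) (Q!j) < \<sigma> \<and> 0 < g1 j} + 1 \<le> w1 \<and> w1 \<le> \<kappa>"
      by (rule inner_count[OF ixs(2) _ _ _ _ f]) (use assms in auto)
    have sub: "{k \<in> set (i#xs). lvl k = l \<and> 0 < r k} \<subseteq> insert i {j \<in> set xs. d (Q!i) (Q!j) < \<sigma> \<and> 0 < g1 j}"
    proof
      fix k assume k: "k \<in> {k \<in> set (i#xs). lvl k = l \<and> 0 < r k}"
      show "k \<in> insert i {j \<in> set xs. d (Q!i) (Q!j) < \<sigma> \<and> 0 < g1 j}"
      proof (cases "k = i")
        case False
        have "r k = g' k \<or> r k = 0" using outer_zero[OF ixs(2), of d \<sigma> \<kappa> Q g' k] r_def by auto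
        then show ?thesis using k False True assms(3) gg by auto
      qed simp
    qed
    have "card {k \<in> set (i#xs). lvl k = l \<and> 0 < r k} \<le> card (insert i {j \<in> set xs. d (Q!i) (Q!j) < \<sigma> \<and> 0 < g1 j})"
      by (rule card_mono[OF _ sub]) simp
    also have "\<dots> \<le> Suc (card {j \<in> set xs. d (Q!i) (Q!j) < \<sigma> \<and> 0 < g1 j})"
      by (simp add: card_insert_if)
    finally show ?thesis using c1 r by simp
  qed
qed


lemma pheno_lt1: "pheno_dist a b < 1 \<longleftrightarrow> ones a = ones b"
  unfolding pheno_dist_def by linarith

lemma ones_le_length: "ones x \<le> length x"
  unfolding ones_def by simp

lemma sort_idx:
  "set (sort_key h [0..<m]) = {..<m}" "distinct (sort_key h [0..<m])"
  by auto

lemma cf_vals: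
  assumes "k < length Q"
  shows "cleared_fitness f pheno_dist 1 \<kappa> Q k = f (Q!k) \<or>
    (cleared_fitness f pheno_dist 1 \<kappa> Q k = 0 \<and> (\<exists>i<length Q. i \<noteq> k \<and> ones (Q!i) = ones (Q!k)))"
  using outer_zero[OF sort_idx(2)[of "\<lambda>i. - f (Q ! i)" "length Q"], of pheno_dist 1 \<kappa> Q "\<lambda>i. f (Q ! i)" k]
  unfolding cleared_fitness_def sort_idx(1) pheno_lt1 by auto

lemma cf_count:
  assumes "1 \<le> \<kappa>"
  shows "card {k. k < length Q \<and> ones (Q!k) = l \<and> 0 < cleared_fitness f pheno_dist 1 \<kappa> Q k} \<le> \<kappa>"
proof -
  have "card {k \<in> set (sort_key (\<lambda>i. - f (Q ! i)) [0..<length Q]). ones (Q!k) = l \<and>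
     0 < clear_outer pheno_dist 1 \<kappa> Q (sort_key (\<lambda>i. - f (Q ! i)) [0..<length Q]) (\<lambda>i. f (Q ! i)) k} \<le> \<kappa>"
    by (rule outer_count[OF sort_idx(2) assms]) (simp add: pheno_lt1)
  then show ?thesis unfolding cleared_fitness_def sort_idx(1) by (simp add: lessThan_def)
qed

lemma cf_total:
  assumes "1 \<le> \<kappa>" "\<forall>x\<in>set Q. ones x \<le> n"
  shows "card {k. k < length Q \<and> 0 < cleared_fitness f pheno_dist 1 \<kappa> Q k} \<le> (n+1)*\<kappa>"
proof -
  let ?cf = "cleared_fitness f pheno_dist 1 \<kappa> Q"
  have "{k. k < length Q \<and> 0 < ?cf k} = (\<Union>l\<in>{..n}. {k. k < length Q \<and> ones (Q!k) = l \<and> 0 < ?cf k})"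
    using assms(2) by (auto simp: nth_mem)
  then have "card {k. k < length Q \<and> 0 < ?cf k} \<le> (\<Sum>l\<in>{..n}. card {k. k < length Q \<and> ones (Q!k) = l \<and> 0 < ?cf k})"
    by (simp add: card_UN_le)
  also have "\<dots> \<le> (\<Sum>l\<in>{..n}. \<kappa>)" by (intro sum_mono cf_count assms(1))
  finally show ?thesis by simp
qed

lemma remove_at_mem: "k < length xs \<Longrightarrow> k \<noteq> z \<Longrightarrow> xs ! k \<in> set (remove_at z xs)"
proof -
  assume a: "k < length xs" "k \<noteq> z"
  show "xs ! k \<in> set (remove_at z xs)"
  proof (cases "k < z")
    case True
    then have "take z xs ! k = xs ! k" "k < length (take z xs)" using a by auto
    then have "xs ! k \<in> set (take z xs)" by (metis nth_mem)
    then show ?thesis unfolding remove_at_def by simp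
  next
    case False
    then have "drop (Suc z) xs ! (k - Suc z) = xs ! k" "k - Suc z < length (drop (Suc z) xs)" using a by auto
    then have "xs ! k \<in> set (drop (Suc z) xs)" by (metis nth_mem)
    then show ?thesis unfolding remove_at_def by simp
  qed
qed

lemma remove_at_length: "z < length xs \<Longrightarrow> length (remove_at z xs) = length xs - 1"
  unfolding remove_at_def by simp

lemma remove_at_set: "set (remove_at z xs) \<subseteq> set xs"
  unfolding remove_at_def using set_drop_subset set_take_subset by fastforce

lemma select_core:
  fixes u :: "nat \<Rightarrow> real"
  assumes P: "length P = \<mu>" "\<forall>x\<in>set P. length x = n" and y: "length y = n"
    and k: "1 \<le> \<kappa>" "(n+1)*\<kappa> \<le> \<mu>" and upos: "\<forall>k\<le>n. 0 < u k"
    and cfd: "cf = cleared_fitness (\<lambda>x. u (ones x)) pheno_dist 1 \<kappa> (P @ [y])"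
    and z: "z < \<mu>" "cf z = Min (cf ` {..<\<mu>})"
    and R: "R = (if cf z \<le> cf \<mu> then remove_at z (P @ [y]) else P)"
  shows "ones ` set P \<subseteq> ones ` set R" "ones y \<notin> ones ` set P \<Longrightarrow> ones y \<in> ones ` set R"
    "length R = \<mu>" "\<forall>x\<in>set R. length x = n"
proof -
  let ?Q = "P @ [y]"
  have lenQ: "length ?Q = Suc \<mu>" using P by simp
  have Qn: "\<forall>x\<in>set ?Q. length x = n" using P y by auto
  have Qones: "\<forall>x\<in>set ?Q. ones x \<le> n"
  proof
    fix x assume "x \<in> set ?Q"
    then have "length x = n" using Qn by blast
    then show "ones x \<le> n" using ones_le_length[of x] by simp
  qed
  have fpos: "0 < u (ones (?Q ! k))" if "k < Suc \<mu>" for k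
  proof -
    have "?Q ! k \<in> set ?Q" using that lenQ by (simp only: nth_mem)
    then have "ones (?Q ! k) \<le> n" using Qones by blast
    then show ?thesis using upos by blast
  qed
  have noall: "\<not> (\<forall>k<Suc \<mu>. 0 < cf k)"
  proof
    assume a: "\<forall>k<Suc \<mu>. 0 < cf k"
    then have "{k. k < length ?Q \<and> 0 < cf k} = {..<Suc \<mu>}" using lenQ by auto
    then have "card {k. k < length ?Q \<and> 0 < cf k} = Suc \<mu>" by simp
    moreover have "card {k. k < length ?Q \<and> 0 < cf k} \<le> (n+1)*\<kappa>"
      using cf_total[OF k(1) Qones, of "\<lambda>x. u (ones x)"] unfolding cfd .
    ultimately show False using k by simp
  qed
  have minle: "cf z \<le> cf k" if "k < \<mu>" for k
  proof -
    have "cf k \<in> cf ` {..<\<mu>}" using that by simp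
    then have "Min (cf ` {..<\<mu>}) \<le> cf k" by (intro Min_le) simp_all
    then show ?thesis using z(2) by simp
  qed
  have pos_contra: False if "0 < cf z" "0 < cf \<mu>"
  proof -
    have "\<forall>k<Suc \<mu>. 0 < cf k"
    proof (intro allI impI)
      fix k assume "k < Suc \<mu>"
      then show "0 < cf k" using that minle[of k] by (cases "k = \<mu>") auto
    qed
    then show False using noall by simp
  qed
  have QP: "?Q ! k = P ! k" if "k < \<mu>" for k using that P by (simp add: nth_append)
  have Qy: "?Q ! \<mu> = y" using P(1) nth_append_length[of P y] by simp
  show "ones ` set P \<subseteq> ones ` set R"
  proof (cases "cf z \<le> cf \<mu>")
    case False then show ?thesis using R by simp
  next
    case True
    have RR: "R = remove_at z ?Q" using True R by simp
    have cz: "cf z \<le> 0" using True pos_contra by force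
    show ?thesis
    proof
      fix o1 assume "o1 \<in> ones ` set P"
      then obtain k where kk: "k < \<mu>" "o1 = ones (P ! k)" using P by (auto simp: in_set_conv_nth)
      show "o1 \<in> ones ` set R"
      proof (cases "k = z")
        case False
        then have "?Q ! k \<in> set R" using RR remove_at_mem[of k ?Q z] kk lenQ by simp
        then show ?thesis using kk QP[of k] by (intro rev_image_eqI[of "?Q ! k"]) simp_all
      next
        case True
        have "cf z \<noteq> u (ones (?Q ! z))" using cz fpos[of z] z by auto
        then obtain i where i: "i < Suc \<mu>" "i \<noteq> z" "ones (?Q ! i) = ones (?Q ! z)"
          using cf_vals[of z ?Q "\<lambda>x. u (ones x)" \<kappa>] cfd lenQ z by auto
        then have "?Q ! i \<in> set R" using RR remove_at_mem[of i ?Q z] lenQ by simp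
        then show ?thesis using kk True i QP[of z] z by (intro rev_image_eqI[of "?Q ! i"]) simp_all
      qed
    qed
  qed
  show "ones y \<in> ones ` set R" if ny: "ones y \<notin> ones ` set P"
  proof -
    have "\<not> (\<exists>i<length ?Q. i \<noteq> \<mu> \<and> ones (?Q ! i) = ones (?Q ! \<mu>))"
    proof
      assume "\<exists>i<length ?Q. i \<noteq> \<mu> \<and> ones (?Q ! i) = ones (?Q ! \<mu>)"
      then obtain i where i: "i < Suc \<mu>" "i \<noteq> \<mu>" "ones (?Q ! i) = ones (?Q ! \<mu>)" using lenQ by auto
      then have i2: "i < \<mu>" by simp
      then have "P ! i \<in> set P" using P by simp
      moreover have "ones (P ! i) = ones y" using i QP[OF i2] Qy by simp
      ultimately show False using ny by (metis image_eqI)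
    qed
    then have "cf \<mu> = u (ones y)" using cf_vals[of \<mu> ?Q "\<lambda>x. u (ones x)" \<kappa>] cfd lenQ Qy by auto
    then have cmu: "0 < cf \<mu>" using fpos[of \<mu>] Qy by simp
    then have "cf z \<le> cf \<mu>" using pos_contra by force
    then have "R = remove_at z ?Q" using R by simp
    then have "?Q ! \<mu> \<in> set R" using remove_at_mem[of \<mu> ?Q z] lenQ z by simp
    then show ?thesis using Qy by (intro rev_image_eqI[of "?Q ! \<mu>"]) simp_all
  qed
  show "length R = \<mu>" using R P z lenQ by (simp add: remove_at_length)
  have "set R \<subseteq> set ?Q" using R remove_at_set[of z ?Q] by auto
  then show "\<forall>x\<in>set R. length x = n" using Qn by blast
qed


lemma ones_Cons: "ones (b # r) = (if b then Suc (ones r) else ones r)"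
  by (simp add: ones_def)

lemma mutate_Cons_map:
  "mutate p (b # bs) = bernoulli_pmf p \<bind> (\<lambda>c. map_pmf (\<lambda>r. (b \<noteq> c) # r) (mutate p bs))"
  by (simp add: map_pmf_def)

lemma set_mutate: "set_pmf (mutate p x) \<subseteq> {y. length y = length x}"
  by (induction x) (auto simp: set_bind_pmf)

lemma prob_bern_bind:
  assumes "0 \<le> p" "p \<le> 1"
  shows "measure_pmf.prob (bernoulli_pmf p \<bind> h) A =
         p * measure_pmf.prob (h True) A + (1 - p) * measure_pmf.prob (h False) A"
proof -
  define a where "a = measure_pmf.prob (h True) A"
  define b where "b = measure_pmf.prob (h False) A"
  have a0: "0 \<le> a" "0 \<le> b" unfolding a_def b_def by auto
  have "emeasure (measure_pmf (bernoulli_pmf p \<bind> h)) A = (\<integral>\<^sup>+c. emeasure (measure_pmf (h c)) A \<partial>bernoulli_pmf p)"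
    by (rule emeasure_bind_pmf)
  also have "\<dots> = emeasure (measure_pmf (h True)) A * ennreal p + emeasure (measure_pmf (h False)) A * ennreal (1 - p)"
    by (rule nn_integral_bernoulli_pmf) (use assms in auto)
  also have "\<dots> = ennreal a * ennreal p + ennreal b * ennreal (1 - p)"
    unfolding a_def b_def measure_pmf.emeasure_eq_measure ..
  also have "\<dots> = ennreal (a * p) + ennreal (b * (1 - p))"
    using a0 assms by (simp only: ennreal_mult[symmetric] diff_ge_0_iff_ge)
  also have "\<dots> = ennreal (a * p + b * (1 - p))"
    using a0 assms by (intro ennreal_plus[symmetric]) auto
  finally have "ennreal (measure_pmf.prob (bernoulli_pmf p \<bind> h) A) = ennreal (a * p + b * (1 - p))"
    unfolding measure_pmf.emeasure_eq_measure .
  then have "measure_pmf.prob (bernoulli_pmf p \<bind> h) A = a * p + b * (1 - p)"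
    using a0 assms by (subst (asm) ennreal_inj) auto
  then show ?thesis unfolding a_def b_def by (simp add: mult.commute)
qed

lemma prob_mutate_Cons:
  assumes "0 \<le> p" "p \<le> 1"
  shows "measure_pmf.prob (mutate p (b # bs)) A =
     p * measure_pmf.prob (mutate p bs) {r. (b \<noteq> True) # r \<in> A} +
     (1 - p) * measure_pmf.prob (mutate p bs) {r. (b \<noteq> False) # r \<in> A}"
  unfolding mutate_Cons_map prob_bern_bind[OF assms] by (simp add: vimage_def)

lemma mutate_same:
  assumes "0 \<le> p" "p \<le> 1"
  shows "(1 - p) ^ length x \<le> measure_pmf.prob (mutate p x) {y. ones y = ones x}"
proof (induction x)
  case Nil then show ?case by (simp add: measure_pmf.prob_eq_1 AE_measure_pmf_iff)
next
  case (Cons b bs)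
  have e: "{r. (b \<noteq> False) # r \<in> {y. ones y = ones (b # bs)}} = {y. ones y = ones bs}"
    by (auto simp: ones_Cons)
  have "(1 - p) ^ length (b # bs) \<le> (1 - p) * measure_pmf.prob (mutate p bs) {y. ones y = ones bs}"
    using Cons assms by (simp add: mult_left_mono)
  also have "\<dots> \<le> measure_pmf.prob (mutate p (b # bs)) {y. ones y = ones (b # bs)}"
    unfolding prob_mutate_Cons[OF assms] e using assms by simp
  finally show ?case .
qed


lemma mutate_down:
  assumes "0 \<le> p" "p \<le> 1"
  shows "real (ones x) * p * (1 - p) ^ length x \<le> measure_pmf.prob (mutate p x) {y. ones y + 1 = ones x}"
proof (induction x)
  case Nil then show ?case by (simp add: ones_def)
next
  case (Cons b bs)
  let ?L = "length bs"
  let ?pr = "\<lambda>S. measure_pmf.prob (mutate p bs) S"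
  have q0: "0 \<le> (1 - p) ^ ?L" "(1 - p) ^ Suc ?L \<le> (1 - p) ^ ?L" "0 \<le> 1 - p" "1 - p \<le> 1"
    using assms by (auto intro: mult_left_le_one_le)
  show ?case
  proof (cases b)
    case True
    have e1: "{r. (b \<noteq> True) # r \<in> {y. ones y + 1 = ones (b # bs)}} = {y. ones y = ones bs}"
      using True by (auto simp: ones_Cons)
    have e2: "{r. (b \<noteq> False) # r \<in> {y. ones y + 1 = ones (b # bs)}} = {y. ones y + 1 = ones bs}"
      using True by (auto simp: ones_Cons)
    have s1: "p * (1 - p) ^ Suc ?L \<le> p * ?pr {y. ones y = ones bs}"
      using mutate_same[OF assms, of bs] q0 assms by (meson mult_left_mono order_trans)
    have s2: "(1 - p) * (real (ones bs) * p * (1 - p) ^ ?L) \<le> (1 - p) * ?pr {y. ones y + 1 = ones bs}"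
      using Cons q0 by (intro mult_left_mono) auto
    have "real (ones (b # bs)) * p * (1 - p) ^ length (b # bs) =
          p * (1 - p) ^ Suc ?L + (1 - p) * (real (ones bs) * p * (1 - p) ^ ?L)"
      using True by (simp add: ones_Cons algebra_simps)
    also have "\<dots> \<le> p * ?pr {y. ones y = ones bs} + (1 - p) * ?pr {y. ones y + 1 = ones bs}"
      using s1 s2 by linarith
    also have "\<dots> = measure_pmf.prob (mutate p (b # bs)) {y. ones y + 1 = ones (b # bs)}"
      unfolding prob_mutate_Cons[OF assms] e1 e2 ..
    finally show ?thesis .
  next
    case False
    have e2: "{r. (b \<noteq> False) # r \<in> {y. ones y + 1 = ones (b # bs)}} = {y. ones y + 1 = ones bs}"
      using False by (auto simp: ones_Cons)
    have s2: "(1 - p) * (real (ones bs) * p * (1 - p) ^ ?L) \<le> (1 - p) * ?pr {y. ones y + 1 = ones bs}"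
      using Cons q0 by (intro mult_left_mono) auto
    have s1: "0 \<le> p * ?pr {r. (b \<noteq> True) # r \<in> {y. ones y + 1 = ones (b # bs)}}"
      using assms by simp
    have "real (ones (b # bs)) * p * (1 - p) ^ length (b # bs) =
          (1 - p) * (real (ones bs) * p * (1 - p) ^ ?L)"
      using False by (simp add: ones_Cons algebra_simps)
    also have "\<dots> \<le> p * ?pr {r. (b \<noteq> True) # r \<in> {y. ones y + 1 = ones (b # bs)}} + (1 - p) * ?pr {y. ones y + 1 = ones bs}"
      using s1 s2 by linarith
    also have "\<dots> = measure_pmf.prob (mutate p (b # bs)) {y. ones y + 1 = ones (b # bs)}"
      unfolding prob_mutate_Cons[OF assms] e2 ..
    finally show ?thesis .
  qed
qed

lemma mutate_up:
  assumes "0 \<le> p" "p \<le> 1"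
  shows "real (length x - ones x) * p * (1 - p) ^ length x \<le> measure_pmf.prob (mutate p x) {y. ones y = ones x + 1}"
proof (induction x)
  case Nil then show ?case by (simp add: ones_def)
next
  case (Cons b bs)
  let ?L = "length bs"
  let ?pr = "\<lambda>S. measure_pmf.prob (mutate p bs) S"
  have ol: "ones bs \<le> ?L" by (rule ones_le_length)
  have q0: "0 \<le> (1 - p) ^ ?L" "(1 - p) ^ Suc ?L \<le> (1 - p) ^ ?L" "0 \<le> 1 - p" "1 - p \<le> 1"
    using assms by (auto intro: mult_left_le_one_le)
  show ?case
  proof (cases b)
    case False
    have e1: "{r. (b \<noteq> True) # r \<in> {y. ones y = ones (b # bs) + 1}} = {y. ones y = ones bs}"
      using False by (auto simp: ones_Cons)
    have e2: "{r. (b \<noteq> False) # r \<in> {y. ones y = ones (b # bs) + 1}} = {y. ones y = ones bs + 1}"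
      using False by (auto simp: ones_Cons)
    have s1: "p * (1 - p) ^ Suc ?L \<le> p * ?pr {y. ones y = ones bs}"
      using mutate_same[OF assms, of bs] q0 assms by (meson mult_left_mono order_trans)
    have s2: "(1 - p) * (real (?L - ones bs) * p * (1 - p) ^ ?L) \<le> (1 - p) * ?pr {y. ones y = ones bs + 1}"
      using Cons q0 by (intro mult_left_mono) auto
    have "real (length (b # bs) - ones (b # bs)) = 1 + real (?L - ones bs)"
      using False ol by (simp add: ones_Cons of_nat_diff)
    then have "real (length (b # bs) - ones (b # bs)) * p * (1 - p) ^ length (b # bs) =
          p * (1 - p) ^ Suc ?L + (1 - p) * (real (?L - ones bs) * p * (1 - p) ^ ?L)"
      by (simp add: algebra_simps)
    also have "\<dots> \<le> p * ?pr {y. ones y = ones bs} + (1 - p) * ?pr {y. ones y = ones bs + 1}"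
      using s1 s2 by linarith
    also have "\<dots> = measure_pmf.prob (mutate p (b # bs)) {y. ones y = ones (b # bs) + 1}"
      unfolding prob_mutate_Cons[OF assms] e1 e2 ..
    finally show ?thesis .
  next
    case True
    have e2: "{r. (b \<noteq> False) # r \<in> {y. ones y = ones (b # bs) + 1}} = {y. ones y = ones bs + 1}"
      using True by (auto simp: ones_Cons)
    have s2: "(1 - p) * (real (?L - ones bs) * p * (1 - p) ^ ?L) \<le> (1 - p) * ?pr {y. ones y = ones bs + 1}"
      using Cons q0 by (intro mult_left_mono) auto
    have s1: "0 \<le> p * ?pr {r. (b \<noteq> True) # r \<in> {y. ones y = ones (b # bs) + 1}}"
      using assms by simp
    have "real (length (b # bs) - ones (b # bs)) * p * (1 - p) ^ length (b # bs) =
          (1 - p) * (real (?L - ones bs) * p * (1 - p) ^ ?L)"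
      using True by (simp add: ones_Cons algebra_simps)
    also have "\<dots> \<le> p * ?pr {r. (b \<noteq> True) # r \<in> {y. ones y = ones (b # bs) + 1}} + (1 - p) * ?pr {y. ones y = ones bs + 1}"
      using s1 s2 by linarith
    also have "\<dots> = measure_pmf.prob (mutate p (b # bs)) {y. ones y = ones (b # bs) + 1}"
      unfolding prob_mutate_Cons[OF assms] e2 ..
    finally show ?thesis .
  qed
qed


definition post :: "(bitstring \<Rightarrow> real) \<Rightarrow> nat \<Rightarrow> population \<Rightarrow> bitstring \<Rightarrow> population pmf" where
  "post f \<kappa> P y = pmf_of_set {k. k < length P \<and> cleared_fitness f pheno_dist 1 \<kappa> (P @ [y]) k =
        Min (cleared_fitness f pheno_dist 1 \<kappa> (P @ [y]) ` {..<length P})} \<bind>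
     (\<lambda>z. return_pmf (if cleared_fitness f pheno_dist 1 \<kappa> (P @ [y]) z \<le> cleared_fitness f pheno_dist 1 \<kappa> (P @ [y]) (length P)
         then remove_at z (P @ [y]) else P))"

lemma ea_step_post:
  "ea_step n f pheno_dist 1 \<kappa> P = pmf_of_set {..<length P} \<bind> (\<lambda>i. mutate (1 / real n) (P ! i) \<bind> post f \<kappa> P)"
  unfolding ea_step_def post_def Let_def ..

lemma post_support:
  fixes u :: "nat \<Rightarrow> real"
  assumes P: "length P = \<mu>" "\<forall>x\<in>set P. length x = n" and y: "length y = n"
    and k: "1 \<le> \<kappa>" "(n+1)*\<kappa> \<le> \<mu>" and upos: "\<forall>k\<le>n. 0 < u k"
    and R: "R \<in> set_pmf (post (\<lambda>x. u (ones x)) \<kappa> P y)"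
  shows "ones ` set P \<subseteq> ones ` set R" "ones y \<notin> ones ` set P \<Longrightarrow> ones y \<in> ones ` set R"
    "length R = \<mu>" "\<forall>x\<in>set R. length x = n"
proof -
  define cf where "cf = cleared_fitness (\<lambda>x. u (ones x)) pheno_dist 1 \<kappa> (P @ [y])"
  have mu: "0 < \<mu>" using k by (metis add_gr_0 less_le_trans mult_pos_pos zero_less_one less_numeral_extra(1) order.strict_trans1)
  have fin: "finite (cf ` {..<\<mu>})" "cf ` {..<\<mu>} \<noteq> {}" using mu by auto
  have "Min (cf ` {..<\<mu>}) \<in> cf ` {..<\<mu>}" by (rule Min_in[OF fin])
  then have ne: "{k. k < \<mu> \<and> cf k = Min (cf ` {..<\<mu>})} \<noteq> {}" by auto
  have fz: "finite {k. k < \<mu> \<and> cf k = Min (cf ` {..<\<mu>})}" by simp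
  from R obtain z where z: "z \<in> {k. k < \<mu> \<and> cf k = Min (cf ` {..<\<mu>})}"
    and Rz: "R = (if cf z \<le> cf \<mu> then remove_at z (P @ [y]) else P)"
    unfolding post_def cf_def[symmetric] P(1) using ne fz by (auto simp: set_bind_pmf)
  show "ones ` set P \<subseteq> ones ` set R" "ones y \<notin> ones ` set P \<Longrightarrow> ones y \<in> ones ` set R"
    "length R = \<mu>" "\<forall>x\<in>set R. length x = n"
    using select_core[OF P y k upos cf_def _ _ Rz] z by auto
qed


locale setup_ea =
  fixes n \<mu> \<kappa> :: nat and u :: "nat \<Rightarrow> real"
  assumes k: "1 \<le> \<kappa>" "(n+1)*\<kappa> \<le> \<mu>" and upos: "\<forall>k\<le>n. 0 < u k"
begin

abbreviation "step P \<equiv> ea_step n (\<lambda>x. u (ones x)) pheno_dist 1 \<kappa> P"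

lemma mu_pos: "0 < \<mu>"
  using k by (metis add_gr_0 less_le_trans mult_pos_pos zero_less_one less_numeral_extra(1) order.strict_trans1)

lemma step_support:
  assumes P: "length P = \<mu>" "\<forall>x\<in>set P. length x = n"
    and R: "R \<in> set_pmf (step P)"
  shows "ones ` set P \<subseteq> ones ` set R" "length R = \<mu>" "\<forall>x\<in>set R. length x = n"
proof -
  have ne: "{..<length P} \<noteq> {}" using P mu_pos by auto
  from R obtain i y where i: "i < \<mu>" and y: "y \<in> set_pmf (mutate (1 / real n) (P ! i))"
    and Ry: "R \<in> set_pmf (post (\<lambda>x. u (ones x)) \<kappa> P y)"
    unfolding ea_step_post using ne P(1) by (auto simp: set_bind_pmf)
  have "length y = n" using y set_mutate[of "1 / real n" "P ! i"] P i by auto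
  then show "ones ` set P \<subseteq> ones ` set R" "length R = \<mu>" "\<forall>x\<in>set R. length x = n"
    using post_support[OF P _ k upos Ry] by auto
qed

lemma step_prob:
  assumes P: "length P = \<mu>" "\<forall>x\<in>set P. length x = n" and k0: "k0 < \<mu>"
    and hY: "\<And>y R. length y = n \<Longrightarrow> y \<in> Y \<Longrightarrow> R \<in> set_pmf (post (\<lambda>x. u (ones x)) \<kappa> P y) \<Longrightarrow> R \<in> E"
  shows "measure_pmf.prob (mutate (1 / real n) (P ! k0)) Y / real \<mu> \<le> measure_pmf.prob (step P) E"
proof -
  let ?M = "\<lambda>j. mutate (1 / real n) (P ! j)"
  let ?po = "post (\<lambda>x. u (ones x)) \<kappa> P"
  have ne: "{..<\<mu>} \<noteq> {}" using mu_pos by auto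
  have "emeasure (?M k0) Y = (\<integral>\<^sup>+y. indicator Y y \<partial>?M k0)"
    by (simp add: nn_integral_indicator)
  also have "\<dots> \<le> (\<integral>\<^sup>+y. emeasure (?po y) E \<partial>?M k0)"
  proof (rule nn_integral_mono_AE, rule AE_pmfI)
    fix y assume y: "y \<in> set_pmf (?M k0)"
    then have ly: "length y = n" using set_mutate[of "1 / real n" "P ! k0"] P k0 by auto
    show "indicator Y y \<le> emeasure (?po y) E"
    proof (cases "y \<in> Y")
      case True
      have "emeasure (?po y) E = 1"
        by (rule measure_pmf.emeasure_eq_1_AE) (auto intro!: AE_pmfI hY[OF ly True])
      then show ?thesis by (simp add: indicator_def)
    qed simp
  qed
  also have "\<dots> = emeasure (bind_pmf (?M k0) ?po) E" by simp
  finally have a: "emeasure (?M k0) Y \<le> emeasure (bind_pmf (?M k0) ?po) E" .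
  have "emeasure (bind_pmf (?M k0) ?po) E \<le> (\<Sum>j\<in>{..<\<mu>}. emeasure (bind_pmf (?M j) ?po) E)"
    by (rule member_le_sum) (use k0 in auto)
  then have "emeasure (?M k0) Y / of_nat \<mu> \<le> (\<Sum>j\<in>{..<\<mu>}. emeasure (bind_pmf (?M j) ?po) E) / of_nat \<mu>"
    using a by (intro divide_right_mono_ennreal) simp
  also have "\<dots> = emeasure (step P) E"
    unfolding ea_step_post P(1) emeasure_bind_pmf
    by (subst nn_integral_pmf_of_set[OF ne]) simp_all
  finally have b: "emeasure (?M k0) Y / of_nat \<mu> \<le> emeasure (step P) E" .
  have "emeasure (?M k0) Y / of_nat \<mu> = ennreal (measure_pmf.prob (?M k0) Y / real \<mu>)"
    unfolding measure_pmf.emeasure_eq_measure ennreal_of_nat_eq_real_of_nat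
    using mu_pos by (intro divide_ennreal) auto
  then show ?thesis using b unfolding measure_pmf.emeasure_eq_measure by simp
qed

end


lemma lyap:
  fixes X :: "nat \<Rightarrow> 's pmf" and K :: "'s \<Rightarrow> 's pmf" and g :: "'s \<Rightarrow> ennreal"
  assumes X: "\<And>t. X (Suc t) = bind_pmf (X t) K"
    and S0: "set_pmf (X 0) \<subseteq> S" and SK: "\<And>s. s \<in> S \<Longrightarrow> set_pmf (K s) \<subseteq> S"
    and dr: "\<And>s. s \<in> S \<Longrightarrow> indicator B s + (\<integral>\<^sup>+ s'. g s' \<partial>K s) \<le> g s"
  shows "(\<Sum>t. emeasure (measure_pmf (X t)) B) \<le> (\<integral>\<^sup>+ s. g s \<partial>X 0)"
proof -
  have supp: "set_pmf (X t) \<subseteq> S" for t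
  proof (induction t)
    case 0 then show ?case using S0 .
  next
    case (Suc t) then show ?case using SK unfolding X by (fastforce simp: set_bind_pmf)
  qed
  have main: "(\<Sum>t<N. emeasure (measure_pmf (X t)) B) + (\<integral>\<^sup>+ s. g s \<partial>X N) \<le> (\<integral>\<^sup>+ s. g s \<partial>X 0)" for N
  proof (induction N)
    case 0 then show ?case by simp
  next
    case (Suc N)
    have "emeasure (measure_pmf (X N)) B + (\<integral>\<^sup>+ s. g s \<partial>X (Suc N)) =
          (\<integral>\<^sup>+ s. indicator B s \<partial>X N) + (\<integral>\<^sup>+ s. (\<integral>\<^sup>+ s'. g s' \<partial>K s) \<partial>X N)"
      unfolding X by (simp add: nn_integral_indicator)
    also have "\<dots> = (\<integral>\<^sup>+ s. indicator B s + (\<integral>\<^sup>+ s'. g s' \<partial>K s) \<partial>X N)"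
      by (rule nn_integral_add[symmetric]) simp_all
    also have "\<dots> \<le> (\<integral>\<^sup>+ s. g s \<partial>X N)"
      by (rule nn_integral_mono_AE, rule AE_pmfI) (use supp dr in blast)
    finally have "emeasure (measure_pmf (X N)) B + (\<integral>\<^sup>+ s. g s \<partial>X (Suc N)) \<le> (\<integral>\<^sup>+ s. g s \<partial>X N)" .
    then have "(\<Sum>t<Suc N. emeasure (measure_pmf (X t)) B) + (\<integral>\<^sup>+ s. g s \<partial>X (Suc N)) \<le>
       (\<Sum>t<N. emeasure (measure_pmf (X t)) B) + (\<integral>\<^sup>+ s. g s \<partial>X N)"
      by (simp add: add.assoc add_left_mono)
    then show ?case using Suc.IH by (rule order_trans)
  qed
  show ?thesis
  proof (rule suminf_le_const)
    show "summable (\<lambda>t. emeasure (measure_pmf (X t)) B)" by simp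
    fix N
    have "(\<Sum>t<N. emeasure (measure_pmf (X t)) B) \<le> (\<Sum>t<N. emeasure (measure_pmf (X t)) B) + (\<integral>\<^sup>+ s. g s \<partial>X N)"
      by simp
    then show "(\<Sum>t<N. emeasure (measure_pmf (X t)) B) \<le> (\<integral>\<^sup>+ s. g s \<partial>X 0)" using main[of N] by (rule order_trans)
  qed
qed

lemma harm_le_ln: "1 \<le> n \<Longrightarrow> (\<Sum>j=1..n. 1 / real j) \<le> 1 + ln (real n)"
proof (induction n rule: dec_induct)
  case base then show ?case by simp
next
  case (step m)
  have m: "0 < real m" using step by simp
  have "ln (real m / real (Suc m)) \<le> real m / real (Suc m) - 1"
    by (rule ln_le_minus_one) (use m in simp)
  also have "\<dots> = - (1 / real (Suc m))" by (simp add: field_simps)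
  finally have "1 / real (Suc m) \<le> ln (real (Suc m)) - ln (real m)"
    using m by (simp add: ln_div)
  then show ?case using step by simp
qed

lemma pow_bound: "2 \<le> n \<Longrightarrow> 1 / 6 \<le> (1 - 1 / real n) ^ n"
proof -
  assume n: "2 \<le> n"
  define m where "m = n - 1"
  have m1: "1 \<le> m" and nm: "n = Suc m" using n by (auto simp: m_def)
  have rm: "0 < real m" using m1 by simp
  have "(1 + 1 / real m) ^ m \<le> exp (1 / real m) ^ m"
    by (intro power_mono) (use rm in auto)
  also have "\<dots> = exp 1" using rm by (simp add: exp_of_nat_mult[symmetric])
  also have "\<dots> \<le> 3" by (rule exp_le)
  finally have a: "(1 + 1 / real m) ^ m \<le> 3" .
  have e: "1 - 1 / real n = real m / real (Suc m)" using nm by (simp add: field_simps)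
  have "(real m / real (Suc m)) ^ m * (1 + 1 / real m) ^ m = 1"
  proof -
    have "(real m / real (Suc m)) * (1 + 1 / real m) = (real m / real (Suc m)) * ((real m + 1) / real m)"
      using rm by (simp add: field_simps)
    also have "\<dots> = 1" using rm by simp
    finally have h: "(real m / real (Suc m)) * (1 + 1 / real m) = 1" .
    show ?thesis by (simp only: power_mult_distrib[symmetric] h power_one)
  qed
  then have h2: "(real m / real (Suc m)) ^ m * (1 + 1 / real m) ^ m = 1" .
  have "0 < 1 + 1 / real m" using rm by (simp add: add_pos_pos)
  then have ypos: "0 < (1 + 1 / real m) ^ m" by (rule zero_less_power)
  have xe: "(real m / real (Suc m)) ^ m = 1 / (1 + 1 / real m) ^ m"
  proof -
    have g: "\<And>a b::real. a * b = 1 \<Longrightarrow> 0 < b \<Longrightarrow> a = 1 / b" by (simp add: eq_divide_eq)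
    show ?thesis by (rule g[OF h2 ypos])
  qed
  have b: "1 / 3 \<le> (real m / real (Suc m)) ^ m"
    unfolding xe by (rule frac_le) (use a ypos in auto)
  have c: "1 / 2 \<le> real m / real (Suc m)" using m1 by (simp add: field_simps)
  have "1 / 6 = (1 / 2) * (1 / 3 :: real)" by simp
  also have "\<dots> \<le> (real m / real (Suc m)) * (real m / real (Suc m)) ^ m"
    by (intro mult_mono b c) auto
  also have "\<dots> = (1 - 1 / real n) ^ n" using e nm by simp
  finally show ?thesis .
qed


definition Gf :: "real \<Rightarrow> nat \<Rightarrow> real" where "Gf C i = C * (\<Sum>j=1..i. 1 / real j)"

definition gP :: "real \<Rightarrow> nat \<Rightarrow> population \<Rightarrow> real" where
  "gP C n P = Gf C (Min (ones ` set P)) + Gf C (n - Max (ones ` set P))"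

lemma Gf_0[simp]: "Gf C 0 = 0" by (simp add: Gf_def)

lemma Gf_nonneg: "0 \<le> C \<Longrightarrow> 0 \<le> Gf C i"
  unfolding Gf_def by (intro mult_nonneg_nonneg sum_nonneg) auto

lemma Gf_mono: "0 \<le> C \<Longrightarrow> i \<le> j \<Longrightarrow> Gf C i \<le> Gf C j"
  unfolding Gf_def by (intro mult_left_mono sum_mono2) auto

lemma Gf_step: "Gf C (Suc k) = Gf C k + C / real (Suc k)"
  unfolding Gf_def by (simp add: sum.cl_ivl_Suc distrib_left)

lemma gP_nonneg: "0 \<le> C \<Longrightarrow> 0 \<le> gP C n P"
  unfolding gP_def using Gf_nonneg by (simp add: add_nonneg_nonneg)

lemma drift_generic:
  fixes M :: "'a pmf" and f :: "'a \<Rightarrow> real"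
  assumes pt: "\<And>R. R \<in> set_pmf M \<Longrightarrow> f R + D * indicator E R \<le> c"
    and D: "0 \<le> D" and pr: "1 \<le> D * measure_pmf.prob M E" and f0: "\<And>R. 0 \<le> f R"
  shows "1 + (\<integral>\<^sup>+R. ennreal (f R) \<partial>M) \<le> ennreal c"
proof -
  have "1 \<le> ennreal (D * measure_pmf.prob M E)" using pr by simp
  also have "\<dots> = ennreal D * emeasure (measure_pmf M) E"
    using D by (simp add: measure_pmf.emeasure_eq_measure ennreal_mult)
  also have "\<dots> = (\<integral>\<^sup>+R. ennreal D * indicator E R \<partial>M)"
    by (rule nn_integral_cmult_indicator[symmetric]) simp
  finally have a: "1 \<le> (\<integral>\<^sup>+R. ennreal D * indicator E R \<partial>M)" .
  have "1 + (\<integral>\<^sup>+R. ennreal (f R) \<partial>M) \<le> (\<integral>\<^sup>+R. ennreal D * indicator E R \<partial>M) + (\<integral>\<^sup>+R. ennreal (f R) \<partial>M)"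
    using a by (rule add_right_mono)
  also have "\<dots> = (\<integral>\<^sup>+R. ennreal D * indicator E R + ennreal (f R) \<partial>M)"
    by (rule nn_integral_add[symmetric]) simp_all
  also have "\<dots> \<le> (\<integral>\<^sup>+R. ennreal c \<partial>M)"
  proof (rule nn_integral_mono_AE, rule AE_pmfI)
    fix R assume R: "R \<in> set_pmf M"
    have "ennreal D * indicator E R + ennreal (f R) = ennreal (D * indicator E R + f R)"
      using D f0[of R] by (simp add: indicator_def ennreal_plus)
    also have "\<dots> \<le> ennreal c" using pt[OF R] by (intro ennreal_leI) simp
    finally show "ennreal D * indicator E R + ennreal (f R) \<le> ennreal c" .
  qed
  also have "\<dots> = ennreal c" by simp
  finally show ?thesis .
qed

lemma prob_num:
  fixes a pr :: real
  assumes "0 < a" "2 \<le> n" "0 < \<mu>" "a * (1 / real n) * (1 - 1 / real n) ^ n / real \<mu> \<le> pr"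
  shows "1 \<le> (6 * real \<mu> * real n / a) * pr"
proof -
  have q: "1 / 6 \<le> (1 - 1 / real n) ^ n" using pow_bound assms(2) by simp
  have pos: "0 \<le> 6 * real \<mu> * real n / a" using assms by simp
  have "a * (1 / real n) * (1 / 6) / real \<mu> \<le> a * (1 / real n) * (1 - 1 / real n) ^ n / real \<mu>"
    using q assms by (intro divide_right_mono mult_left_mono) auto
  also have "\<dots> \<le> pr" by (rule assms(4))
  finally have b: "a * (1 / real n) * (1 / 6) / real \<mu> \<le> pr" .
  have e: "(6 * real \<mu> * real n / a) * (a * (1 / real n) * (1 / 6) / real \<mu>) = 1"
    using assms by (simp add: field_simps)
  have "(6 * real \<mu> * real n / a) * (a * (1 / real n) * (1 / 6) / real \<mu>) \<le> (6 * real \<mu> * real n / a) * pr"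
    by (rule mult_left_mono[OF b pos])
  then show ?thesis unfolding e .
qed


context setup_ea
begin

lemma levels_basic:
  assumes P: "length P = \<mu>" "\<forall>x\<in>set P. length x = n"
  shows "finite (ones ` set P)" "ones ` set P \<noteq> {}" "\<forall>l\<in>ones ` set P. l \<le> n"
  using P mu_pos ones_le_length by (auto simp: neq_Nil_conv)

lemma drift_core:
  assumes n2: "2 \<le> n" and P: "length P = \<mu>" "\<forall>x\<in>set P. length x = n"
    and nd: "\<not> (Min (ones ` set P) = 0 \<and> Max (ones ` set P) = n)"
  shows "1 + (\<integral>\<^sup>+R. ennreal (gP (6 * real \<mu> * real n) n R) \<partial>step P) \<le> ennreal (gP (6 * real \<mu> * real n) n P)"
proof -
  define C where "C = 6 * real \<mu> * real n"
  have C0: "0 \<le> C" unfolding C_def by simp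
  define m where "m = Min (ones ` set P)"
  define M where "M = Max (ones ` set P)"
  note lb = levels_basic[OF P]
  have mM: "M \<le> n" unfolding M_def using lb by auto
  have mle: "\<And>x. x \<in> set P \<Longrightarrow> m \<le> ones x" unfolding m_def using lb by auto
  have Mge: "\<And>x. x \<in> set P \<Longrightarrow> ones x \<le> M" unfolding M_def using lb by auto
  have supp: "Min (ones ` set R) \<le> m \<and> M \<le> Max (ones ` set R) \<and> Max (ones ` set R) \<le> n \<and>
              finite (ones ` set R) \<and> ones ` set R \<noteq> {}"
    if R: "R \<in> set_pmf (step P)" for R
  proof -
    note s = step_support[OF P R]
    note lR = levels_basic[OF s(2) s(3)]
    have "Min (ones ` set R) \<le> m" unfolding m_def using s(1) lb lR by (intro Min_antimono) auto
    moreover have "M \<le> Max (ones ` set R)" unfolding M_def using s(1) lb lR by (intro Max_mono) auto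
    moreover have "Max (ones ` set R) \<le> n" using lR by auto
    ultimately show ?thesis using lR by blast
  qed
  have n0: "0 < n" using n2 by simp
  have p: "0 \<le> 1 / real n" "1 / real n \<le> 1" using n0 by auto
  obtain x0 where x0: "x0 \<in> set P" "ones x0 = m" using lb unfolding m_def by (metis Min_in imageE)
  obtain k0 where k0: "k0 < \<mu>" "P ! k0 = x0" using x0 P by (metis in_set_conv_nth)
  obtain x1 where x1: "x1 \<in> set P" "ones x1 = M" using lb unfolding M_def by (metis Max_in imageE)
  obtain k1 where k1: "k1 < \<mu>" "P ! k1 = x1" using x1 P by (metis in_set_conv_nth)
  have gPP: "gP C n P = Gf C m + Gf C (n - M)" unfolding gP_def m_def M_def ..
  show ?thesis
  proof (cases "0 < m")
    case True
    define E where "E = {R. \<exists>x\<in>set R. ones x < m}"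
    define D where "D = C / real m"
    have pt: "gP C n R + D * indicator E R \<le> gP C n P" if R: "R \<in> set_pmf (step P)" for R
    proof -
      note sR = supp[OF R]
      have a2: "Gf C (n - Max (ones ` set R)) \<le> Gf C (n - M)" using sR by (intro Gf_mono C0) auto
      show ?thesis
      proof (cases "R \<in> E")
        case False
        have "Gf C (Min (ones ` set R)) \<le> Gf C m" using sR by (intro Gf_mono C0) auto
        then show ?thesis using False a2 gPP unfolding gP_def by simp
      next
        case True
        then have "Min (ones ` set R) < m" unfolding E_def using sR by (auto simp: Min_less_iff)
        then have "Gf C (Min (ones ` set R)) \<le> Gf C (m - 1)" by (intro Gf_mono C0) auto
        moreover have "Gf C m = Gf C (m - 1) + D"
          using Gf_step[of C "m - 1"] \<open>0 < m\<close> unfolding D_def by simp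
        ultimately show ?thesis using True a2 gPP unfolding gP_def by simp
      qed
    qed
    have hY: "R \<in> E" if y: "length y = n" "y \<in> {y. ones y + 1 = m}"
      and R: "R \<in> set_pmf (post (\<lambda>x. u (ones x)) \<kappa> P y)" for y R
    proof -
      have "ones y \<notin> ones ` set P" using mle y by force
      then have "ones y \<in> ones ` set R" using post_support(2)[OF P y(1) k upos R] by blast
      then show ?thesis unfolding E_def using y by auto
    qed
    have "real m * (1 / real n) * (1 - 1 / real n) ^ n / real \<mu>
        \<le> measure_pmf.prob (mutate (1 / real n) (P ! k0)) {y. ones y + 1 = m} / real \<mu>"
      using mutate_down[OF p, of "P ! k0"] k0 x0 P by (intro divide_right_mono) auto
    also have "\<dots> \<le> measure_pmf.prob (step P) E" by (rule step_prob[OF P k0(1) hY])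
    finally have "1 \<le> D * measure_pmf.prob (step P) E"
      unfolding D_def C_def using True n2 mu_pos by (intro prob_num) auto
    then show ?thesis unfolding C_def[symmetric]
      by (intro drift_generic[OF pt]) (auto simp: D_def C0 gP_nonneg)
  next
    case False
    then have m0: "m = 0" by simp
    then have Mn: "M < n" using nd mM unfolding m_def M_def by auto
    define E where "E = {R. \<exists>x\<in>set R. M < ones x}"
    define D where "D = C / real (n - M)"
    have pt: "gP C n R + D * indicator E R \<le> gP C n P" if R: "R \<in> set_pmf (step P)" for R
    proof -
      note sR = supp[OF R]
      have a1: "Gf C (Min (ones ` set R)) \<le> Gf C m" using sR by (intro Gf_mono C0) auto
      show ?thesis
      proof (cases "R \<in> E")
        case False
        have "Gf C (n - Max (ones ` set R)) \<le> Gf C (n - M)" using sR by (intro Gf_mono C0) auto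
        then show ?thesis using False a1 gPP unfolding gP_def by simp
      next
        case True
        then have "M < Max (ones ` set R)" unfolding E_def using sR by (auto simp: Max_gr_iff)
        then have "Gf C (n - Max (ones ` set R)) \<le> Gf C (n - M - 1)" by (intro Gf_mono C0) auto
        moreover have "Gf C (n - M) = Gf C (n - M - 1) + D"
          using Gf_step[of C "n - M - 1"] Mn unfolding D_def by (simp add: Suc_diff_Suc)
        ultimately show ?thesis using True a1 gPP unfolding gP_def by simp
      qed
    qed
    have hY: "R \<in> E" if y: "length y = n" "y \<in> {y. ones y = M + 1}"
      and R: "R \<in> set_pmf (post (\<lambda>x. u (ones x)) \<kappa> P y)" for y R
    proof -
      have "ones y \<notin> ones ` set P" using Mge y by force
      then have "ones y \<in> ones ` set R" using post_support(2)[OF P y(1) k upos R] by blast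
      then obtain x where "x \<in> set R" "ones x = ones y" by auto
      then show ?thesis unfolding E_def using y by force
    qed
    have "real (n - M) * (1 / real n) * (1 - 1 / real n) ^ n / real \<mu>
        \<le> measure_pmf.prob (mutate (1 / real n) (P ! k1)) {y. ones y = M + 1} / real \<mu>"
      using mutate_up[OF p, of "P ! k1"] k1 x1 P by (intro divide_right_mono) auto
    also have "\<dots> \<le> measure_pmf.prob (step P) E" by (rule step_prob[OF P k1(1) hY])
    finally have "1 \<le> D * measure_pmf.prob (step P) E"
      unfolding D_def C_def using Mn n2 mu_pos by (intro prob_num) auto
    then show ?thesis unfolding C_def[symmetric]
      by (intro drift_generic[OF pt]) (auto simp: D_def C0 gP_nonneg)
  qed
qed

end


lemma ones_zero: "ones x = 0 \<Longrightarrow> x = replicate (length x) False"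
proof -
  assume "ones x = 0"
  then have "\<forall>b\<in>set x. b = False" unfolding ones_def by (auto simp: filter_empty_conv)
  then show ?thesis by (simp add: replicate_length_same)
qed

lemma ones_full: "ones x = length x \<Longrightarrow> x = replicate (length x) True"
proof -
  assume a: "ones x = length x"
  have "\<forall>b\<in>set x. b = True"
  proof (rule ccontr)
    assume "\<not> (\<forall>b\<in>set x. b = True)"
    then obtain b where "b \<in> set x" "\<not> id b" by auto
    then have "length (filter id x) < length x" by (rule length_filter_less)
    then show False using a unfolding ones_def by simp
  qed
  then show ?thesis by (simp add: replicate_length_same)
qed

lemma init_support: "set_pmf (init_pop n m) \<subseteq> {P. length P = m \<and> (\<forall>x\<in>set P. length x = n)}"
proof (induction m)
  case 0 then show ?case by simp
next
  case (Suc m)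
  have "{xs :: bool list. length xs = n} = {xs. set xs \<subseteq> UNIV \<and> length xs = n}" by auto
  then have fin: "finite {xs :: bool list. length xs = n}" using finite_lists_length_eq[of "UNIV :: bool set" n] by simp
  have ne: "{xs :: bool list. length xs = n} \<noteq> {}" by (auto intro: exI[of _ "replicate n False"])
  have "set_pmf (uniform_string n) = {xs. length xs = n}"
    unfolding uniform_string_def using fin ne by simp
  show ?case
  proof
    fix P assume "P \<in> set_pmf (init_pop n (Suc m))"
    then obtain x xs where x: "x \<in> set_pmf (uniform_string n)" "xs \<in> set_pmf (init_pop n m)" "P = x # xs"
      by (auto simp: set_bind_pmf)
    have "length x = n" using x(1) \<open>set_pmf (uniform_string n) = {xs. length xs = n}\<close> by simp
    moreover have "length xs = m \<and> (\<forall>x\<in>set xs. length x = n)" using x(2) Suc by blast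
    ultimately show "P \<in> {P. length P = Suc m \<and> (\<forall>x\<in>set P. length x = n)}" using x(3) by simp
  qed
qed

context setup_ea
begin

lemma time_bound:
  assumes n2: "2 \<le> n"
  shows "expected_time n \<mu> (\<lambda>x. u (ones x)) pheno_dist 1 \<kappa> \<le> ennreal (2 * Gf (6 * real \<mu> * real n) n)"
proof -
  define C where "C = 6 * real \<mu> * real n"
  have C0: "0 \<le> C" unfolding C_def by simp
  define X where "X = ea_state n \<mu> (\<lambda>x. u (ones x)) pheno_dist 1 \<kappa>"
  define K where "K = (\<lambda>(P, a, b). map_pmf (\<lambda>P'. (P', a \<or> replicate n False \<in> set P', b \<or> replicate n True \<in> set P'))
               (step P))"
  define S where "S = {s :: population \<times> bool \<times> bool. length (fst s) = \<mu> \<and> (\<forall>x\<in>set (fst s). length x = n) \<and>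
     (replicate n False \<in> set (fst s) \<longrightarrow> fst (snd s)) \<and> (replicate n True \<in> set (fst s) \<longrightarrow> snd (snd s))}"
  define B where "B = {s :: population \<times> bool \<times> bool. \<not> (fst (snd s) \<and> snd (snd s))}"
  define g where "g = (\<lambda>s :: population \<times> bool \<times> bool. ennreal (gP C n (fst s)))"
  have XS: "X (Suc t) = bind_pmf (X t) K" for t unfolding X_def K_def by simp
  have S0: "set_pmf (X 0) \<subseteq> S"
    unfolding X_def S_def using init_support[of n \<mu>] by auto
  have SK: "set_pmf (K s) \<subseteq> S" if s: "s \<in> S" for s
  proof -
    obtain P a b where sP: "s = (P, a, b)" by (cases s) auto
    have P: "length P = \<mu>" "\<forall>x\<in>set P. length x = n" using s sP unfolding S_def by auto
    show ?thesis unfolding K_def sP S_def using step_support[OF P] by auto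
  qed
  have dr: "indicator B s + (\<integral>\<^sup>+ s'. g s' \<partial>K s) \<le> g s" if s: "s \<in> S" for s
  proof -
    obtain P a b where sP: "s = (P, a, b)" by (cases s) auto
    have P: "length P = \<mu>" "\<forall>x\<in>set P. length x = n" using s sP unfolding S_def by auto
    have ig: "(\<integral>\<^sup>+ s'. g s' \<partial>K s) = (\<integral>\<^sup>+R. ennreal (gP C n R) \<partial>step P)"
      unfolding K_def sP g_def by simp
    note lb = levels_basic[OF P]
    show ?thesis
    proof (cases "Min (ones ` set P) = 0 \<and> Max (ones ` set P) = n")
      case False
      have "indicator B s + (\<integral>\<^sup>+ s'. g s' \<partial>K s) \<le> 1 + (\<integral>\<^sup>+R. ennreal (gP C n R) \<partial>step P)"
        unfolding ig by (intro add_right_mono) (simp add: indicator_def)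
      also have "\<dots> \<le> g s" unfolding g_def sP C_def using drift_core[OF n2 P False] by simp
      finally show ?thesis .
    next
      case True
      have "Min (ones ` set P) \<in> ones ` set P" "Max (ones ` set P) \<in> ones ` set P"
        using lb by (intro Min_in, simp, simp, intro Max_in, simp, simp)
      then have "0 \<in> ones ` set P" "n \<in> ones ` set P" using True by simp_all
      then obtain x0 x1 where x: "x0 \<in> set P" "ones x0 = 0" "x1 \<in> set P" "ones x1 = n" by auto
      have "x0 = replicate n False" using ones_zero[OF x(2)] P x by auto
      moreover have "x1 = replicate n True" using ones_full[of x1] P x by auto
      ultimately have ab: "a \<and> b" using s sP x unfolding S_def by auto
      have "(\<integral>\<^sup>+R. ennreal (gP C n R) \<partial>step P) \<le> (\<integral>\<^sup>+R. 0 \<partial>step P)"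
      proof (rule nn_integral_mono_AE, rule AE_pmfI)
        fix R assume R: "R \<in> set_pmf (step P)"
        note sR = step_support[OF P R]
        note lR = levels_basic[OF sR(2) sR(3)]
        have "0 \<in> ones ` set R" "n \<in> ones ` set R" using sR(1) \<open>0 \<in> ones ` set P\<close> \<open>n \<in> ones ` set P\<close> by auto
        then have "Min (ones ` set R) \<le> 0" "n \<le> Max (ones ` set R)" using lR
          by (intro Min_le, simp, simp, intro Max_ge, simp, simp)
        moreover have "Max (ones ` set R) \<le> n" using lR by simp
        ultimately have "Min (ones ` set R) = 0" "Max (ones ` set R) = n" by simp_all
        then show "ennreal (gP C n R) \<le> 0" unfolding gP_def by simp
      qed
      then show ?thesis unfolding ig using ab sP B_def by (simp add: indicator_def)
    qed
  qed
  have "expected_time n \<mu> (\<lambda>x. u (ones x)) pheno_dist 1 \<kappa> = (\<Sum>t. emeasure (measure_pmf (X t)) B)"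
    unfolding expected_time_def X_def B_def measure_pmf.emeasure_eq_measure ..
  also have "\<dots> \<le> (\<integral>\<^sup>+ s. g s \<partial>X 0)" by (rule lyap[OF XS S0 SK dr])
  also have "\<dots> \<le> (\<integral>\<^sup>+ s. ennreal (2 * Gf C n) \<partial>X 0)"
  proof (rule nn_integral_mono_AE, rule AE_pmfI)
    fix s assume "s \<in> set_pmf (X 0)"
    then have P: "length (fst s) = \<mu>" "\<forall>x\<in>set (fst s). length x = n" using S0 unfolding S_def by auto
    note lb = levels_basic[OF P]
    have "Min (ones ` set (fst s)) \<in> ones ` set (fst s)" using lb by (intro Min_in) simp_all
    then have "Min (ones ` set (fst s)) \<le> n" using lb(3) by blast
    then have "Gf C (Min (ones ` set (fst s))) \<le> Gf C n" by (intro Gf_mono C0)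
    moreover have "Gf C (n - Max (ones ` set (fst s))) \<le> Gf C n" by (intro Gf_mono C0) simp
    ultimately show "g s \<le> ennreal (2 * Gf C n)" unfolding g_def gP_def by (intro ennreal_leI) simp
  qed
  also have "\<dots> = ennreal (2 * Gf C n)" by simp
  finally show ?thesis unfolding C_def .
qed

end

lemma main_bound:
  fixes u :: "nat \<Rightarrow> real"
  assumes n3: "3 \<le> n" and a: "(\<forall>k \<le> n. 0 < u k) \<and> 1 \<le> \<kappa> \<and> (n + 1) * \<kappa> \<le> \<mu>"
  shows "expected_time n \<mu> (\<lambda>x. u (ones x)) pheno_dist 1 \<kappa> \<le> ennreal (24 * real \<mu> * real n * ln (real n))"
proof -
  interpret setup_ea n \<mu> \<kappa> u using a by unfold_locales auto
  have tb: "expected_time n \<mu> (\<lambda>x. u (ones x)) pheno_dist 1 \<kappa> \<le> ennreal (2 * Gf (6 * real \<mu> * real n) n)"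
    by (rule time_bound) (use n3 in simp)
  have h: "(\<Sum>j=1..n. 1 / real j) \<le> 1 + ln (real n)" by (rule harm_le_ln) (use n3 in simp)
  have l1: "1 \<le> ln (real n)"
  proof -
    have "exp 1 \<le> real n" using exp_le n3 by linarith
    then have "ln (exp 1) \<le> ln (real n)" using n3 by (subst ln_le_cancel_iff) auto
    then show ?thesis by simp
  qed
  have c0: "0 \<le> 12 * real \<mu> * real n" by simp
  have "2 * Gf (6 * real \<mu> * real n) n = (12 * real \<mu> * real n) * (\<Sum>j=1..n. 1 / real j)"
    unfolding Gf_def by simp
  also have "\<dots> \<le> (12 * real \<mu> * real n) * (1 + ln (real n))" by (rule mult_left_mono[OF h c0])
  also have "\<dots> \<le> (12 * real \<mu> * real n) * (2 * ln (real n))" by (rule mult_left_mono) (use l1 c0 in auto)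
  also have "\<dots> = 24 * real \<mu> * real n * ln (real n)" by simp
  finally have "2 * Gf (6 * real \<mu> * real n) n \<le> 24 * real \<mu> * real n * ln (real n)" .
  then have "ennreal (2 * Gf (6 * real \<mu> * real n) n) \<le> ennreal (24 * real \<mu> * real n * ln (real n))"
    by (rule ennreal_leI)
  then show ?thesis using tb by (rule order_trans[rotated])
qed

theorem lemma2:
  shows "\<exists>c > 0. \<exists>n0. \<forall>n \<ge> n0. \<forall>(u :: nat \<Rightarrow> real) (\<kappa> :: nat) (\<mu> :: nat).
           (\<forall>k \<le> n. 0 < u k) \<and> 1 \<le> \<kappa> \<and> (n + 1) * \<kappa> \<le> \<mu> \<longrightarrow>
           expected_time n \<mu> (\<lambda>x. u (ones x)) pheno_dist 1 \<kappa>
             \<le> ennreal (c * real \<mu> * real n * ln (real n))"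
proof -
  have "\<forall>n \<ge> 3. \<forall>(u :: nat \<Rightarrow> real) (\<kappa> :: nat) (\<mu> :: nat).
           (\<forall>k \<le> n. 0 < u k) \<and> 1 \<le> \<kappa> \<and> (n + 1) * \<kappa> \<le> \<mu> \<longrightarrow>
           expected_time n \<mu> (\<lambda>x. u (ones x)) pheno_dist 1 \<kappa>
             \<le> ennreal (24 * real \<mu> * real n * ln (real n))"
    using main_bound by blast
  then show ?thesis by (intro exI[of _ "24::real"]) auto
qed

end
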